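(* Let $\mathcal{V}$ be a finite set and let $p_{\theta^{(t)}}, p_{\mathrm{sft}}$ be probability distributions on $\mathcal{V}$ with full support. Let $\alpha\in[0,1)$ and define \[ q^{(t)}_y = \frac{p_{\theta^{(t)}}(y)^{1-\alpha}\,p_{\mathrm{sft}}(y)^{\alpha}}{Z}, \qquad Z=\sum_{y'\in\mathcal{V}} p_{\theta^{(t)}}(y')^{1-\alpha}\,p_{\mathrm{sft}}(y')^{\alpha}. \] Then \[ \mathrm{KL}\big(q^{(t)}\,\|\,p_{\theta^{(t)}}\big) \le \frac{\alpha}{1-\alpha}\,\mathrm{KL}\big(p_{\theta^{(t)}}\,\|\,p_{\mathrm{sft}}\big). \]
   Context: $\mathrm{KL}(u\|v)=\sum_{i} u_i\log(u_i/v_i)$ is the Kullback--Leibler divergence. $q^{(t)}$ is the anchor obtained by linear interpolation of logits followed by softmax (a renormalized geometric mean of the two distributions). In the paper these are conditional output distributions for a fixed input $x$, with full support since they are softmax outputs. *)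

theory Defs
  imports "HOL-Analysis.Analysis"
begin

definition KL :: "'a set \<Rightarrow> ('a \<Rightarrow> real) \<Rightarrow> ('a \<Rightarrow> real) \<Rightarrow> real" where
  "KL V u v = (\<Sum>i\<in>V. u i * ln (u i / v i))"

definition full_support_dist :: "'a set \<Rightarrow> ('a \<Rightarrow> real) \<Rightarrow> bool" where
  "full_support_dist V p \<longleftrightarrow> (\<forall>y\<in>V. p y > 0) \<and> (\<Sum>y\<in>V. p y) = 1"

definition anchor :: "'a set \<Rightarrow> real \<Rightarrow> ('a \<Rightarrow> real) \<Rightarrow> ('a \<Rightarrow> real) \<Rightarrow> ('a \<Rightarrow> real)" where
  "anchor V \<alpha> p s = (\<lambda>y. p y powr (1 - \<alpha>) * s y powr \<alpha> /
      (\<Sum>y'\<in>V. p y' powr (1 - \<alpha>) * s y' powr \<alpha>))"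

end

theory Submission
  imports Defs
begin

theorem lemma5p3:
  fixes V :: "'a set" and p s :: "'a \<Rightarrow> real" and \<alpha> :: real
  assumes "finite V"
    and "full_support_dist V p" and "full_support_dist V s"
    and "0 \<le> \<alpha>" and "\<alpha> < 1"
  shows "KL V (anchor V \<alpha> p s) p \<le> \<alpha> / (1 - \<alpha>) * KL V p s"
proof -
  note fin = assms(1)
  have pp: "\<And>y. y \<in> V \<Longrightarrow> p y > 0" and p1: "(\<Sum>y\<in>V. p y) = 1"
    using assms(2) unfolding full_support_dist_def by auto
  have sp: "\<And>y. y \<in> V \<Longrightarrow> s y > 0" and s1: "(\<Sum>y\<in>V. s y) = 1"
    using assms(3) unfolding full_support_dist_def by auto
  define a where "a = \<alpha>"
  define L where "L y = ln (s y) - ln (p y)" for y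
  define w where "w y = p y powr (1 - a) * s y powr a" for y
  define Z where "Z = (\<Sum>y\<in>V. w y)"
  define q where "q y = w y / Z" for y
  have Vne: "V \<noteq> {}" using p1 by auto
  have wp: "w y > 0" if "y \<in> V" for y using pp[OF that] sp[OF that] by (simp add: w_def)
  have Zp: "Z > 0" unfolding Z_def using wp fin Vne by (simp add: sum_pos)
  have qp: "\<And>y. y \<in> V \<Longrightarrow> q y > 0" using wp Zp by (simp add: q_def)
  have q1: "(\<Sum>y\<in>V. q y) = 1" using Zp by (simp add: q_def Z_def sum_divide_distrib[symmetric])
  have lnw: "ln (w y) = (1 - a) * ln (p y) + a * ln (s y)" if "y \<in> V" for y
    using pp[OF that] sp[OF that] by (simp add: w_def ln_mult ln_powr)
  have wexp: "w y = p y * exp (a * L y)" if "y \<in> V" for y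
  proof -
    have "w y = exp (ln (w y))" using wp[OF that] by simp
    also have "\<dots> = exp (ln (p y) + a * L y)" using lnw[OF that] by (simp add: L_def algebra_simps)
    also have "\<dots> = p y * exp (a * L y)" using pp[OF that] by (simp add: exp_add)
    finally show ?thesis .
  qed
  have lqp: "ln (q y / p y) = a * L y - ln Z" if "y \<in> V" for y
    using wp[OF that] Zp pp[OF that] lnw[OF that]
    by (simp add: q_def ln_div ln_mult L_def algebra_simps)
  have lqs: "ln (q y / s y) = - (1 - a) * L y - ln Z" if "y \<in> V" for y
    using wp[OF that] Zp sp[OF that] lnw[OF that]
    by (simp add: q_def ln_div ln_mult L_def algebra_simps)
  define A where "A = (\<Sum>y\<in>V. q y * L y)"
  have KLqp: "KL V q p = a * A - ln Z"
  proof -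
    have "KL V q p = (\<Sum>y\<in>V. a * (q y * L y) - ln Z * q y)"
      unfolding KL_def by (rule sum.cong) (auto simp: lqp algebra_simps)
    also have "\<dots> = a * A - ln Z"
      by (simp add: sum_subtractf sum_distrib_left[symmetric] q1 A_def)
    finally show ?thesis .
  qed
  have KLqs: "KL V q s = - (1 - a) * A - ln Z"
  proof -
    have "KL V q s = (\<Sum>y\<in>V. (- (1 - a)) * (q y * L y) - ln Z * q y)"
      unfolding KL_def by (rule sum.cong) (auto simp: lqs algebra_simps)
    also have "\<dots> = - (1 - a) * A - ln Z"
      by (simp add: sum_subtractf sum_distrib_left[symmetric] q1 A_def)
    finally show ?thesis .
  qed
  have KLps: "KL V p s = - (\<Sum>y\<in>V. p y * L y)"
  proof -
    have "KL V p s = (\<Sum>y\<in>V. - (p y * L y))"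
      unfolding KL_def
    proof (rule sum.cong)
      fix y assume y: "y \<in> V"
      show "p y * ln (p y / s y) = - (p y * L y)"
        using pp[OF y] sp[OF y] by (simp add: ln_div L_def algebra_simps)
    qed simp
    then show ?thesis by (simp add: sum_negf)
  qed
  have gibbs: "KL V q s \<ge> 0"
  proof -
    have "(\<Sum>y\<in>V. q y * ln (s y / q y)) \<le> (\<Sum>y\<in>V. q y * (s y / q y - 1))"
    proof (rule sum_mono)
      fix y assume y: "y \<in> V"
      have "ln (s y / q y) \<le> s y / q y - 1"
        using sp[OF y] qp[OF y] by (intro ln_le_minus_one) simp
      then show "q y * ln (s y / q y) \<le> q y * (s y / q y - 1)"
        using qp[OF y] by (simp add: mult_left_mono)
    qed
    also have "\<dots> = (\<Sum>y\<in>V. s y - q y)"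
    proof (rule sum.cong)
      fix y assume y: "y \<in> V"
      show "q y * (s y / q y - 1) = s y - q y"
        using qp[OF y] by (simp add: field_simps)
    qed simp
    also have "\<dots> = 0" by (simp add: sum_subtractf s1 q1)
    finally have "(\<Sum>y\<in>V. q y * ln (s y / q y)) \<le> 0" .
    moreover have "(\<Sum>y\<in>V. q y * ln (s y / q y)) = - KL V q s"
      unfolding KL_def sum_negf[symmetric]
    proof (rule sum.cong)
      fix y assume y: "y \<in> V"
      show "q y * ln (s y / q y) = - (q y * ln (q y / s y))"
        using qp[OF y] sp[OF y] by (simp add: ln_div algebra_simps)
    qed simp
    ultimately show ?thesis by simp
  qed
  have jensen: "a * (\<Sum>y\<in>V. p y * L y) \<le> ln Z"
  proof -
    have "(\<Sum>y\<in>V. p y * ln (exp (a * L y) / Z)) \<le> (\<Sum>y\<in>V. p y * (exp (a * L y) / Z - 1))"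
    proof (rule sum_mono)
      fix y assume y: "y \<in> V"
      have "ln (exp (a * L y) / Z) \<le> exp (a * L y) / Z - 1"
        using Zp by (intro ln_le_minus_one) simp
      then show "p y * ln (exp (a * L y) / Z) \<le> p y * (exp (a * L y) / Z - 1)"
        using pp[OF y] by (simp add: mult_left_mono)
    qed
    also have "\<dots> = (\<Sum>y\<in>V. w y / Z - p y)"
    proof (rule sum.cong)
      fix y assume y: "y \<in> V"
      show "p y * (exp (a * L y) / Z - 1) = w y / Z - p y"
        using Zp wexp[OF y] by (simp add: field_simps)
    qed simp
    also have "\<dots> = 0"
      using Zp by (simp add: sum_subtractf p1 Z_def sum_divide_distrib[symmetric])
    finally have "(\<Sum>y\<in>V. p y * ln (exp (a * L y) / Z)) \<le> 0" .
    moreover have "(\<Sum>y\<in>V. p y * ln (exp (a * L y) / Z)) = a * (\<Sum>y\<in>V. p y * L y) - ln Z"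
    proof -
      have "(\<Sum>y\<in>V. p y * ln (exp (a * L y) / Z)) = (\<Sum>y\<in>V. a * (p y * L y) - ln Z * p y)"
        by (rule sum.cong) (use Zp in \<open>auto simp: ln_div algebra_simps\<close>)
      also have "\<dots> = a * (\<Sum>y\<in>V. p y * L y) - ln Z"
        by (simp add: sum_subtractf sum_distrib_left[symmetric] p1)
      finally show ?thesis .
    qed
    ultimately show ?thesis by simp
  qed
  have a0: "0 \<le> a" and a1: "a < 1" using assms a_def by auto
  have key: "(1 - a) * KL V q p \<le> a * KL V p s"
  proof -
    have "(1 - a) * KL V q p + a * KL V q s = - ln Z"
      unfolding KLqp KLqs by (simp add: algebra_simps)
    moreover have "a * KL V q s \<ge> 0" using gibbs a0 by simp
    moreover have "a * KL V p s = - (a * (\<Sum>y\<in>V. p y * L y))" using KLps by simp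
    ultimately show ?thesis using jensen by linarith
  qed
  have "anchor V \<alpha> p s = q"
    by (simp add: anchor_def fun_eq_iff q_def w_def Z_def a_def)
  then show ?thesis
    using key a1 by (simp add: a_def pos_le_divide_eq mult.commute)
qed

end
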